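(* There is an algorithm that, given a \textsc{2-Visits} instance $d_1\le\dots\le d_n$ whose deadlines are pairwise distinct, decides in $O(n)$ time whether a feasible schedule exists; moreover, if one exists, a feasible schedule can be constructed in $O(n)$ time.
   Context: \textsc{2-Visits}: given a non-decreasing sequence of $n$ positive integers (deadlines) $d_1\le \dots\le d_n$, decide whether there exists a schedule of length $2n$ (an assignment of one visit to each position $1,\dots,2n$) containing exactly two visits of each node $i\in[n]$, such that the first visit of $i$ is at position at most $d_i$ and the second visit of $i$ is at most $d_i$ positions after the first visit of $i$. Such a schedule is called feasible. *)

theory Defs
  imports Main
begin

text \<open>A schedule is a list sigma of length 2n; position p (1-based) holds the node
  sigma ! (p-1), nodes are 1..n.  Node i (1-based) has deadline ds ! (i-1).\<close>

definition feasible_schedule :: "nat list \<Rightarrow> nat list \<Rightarrow> bool" where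
  "feasible_schedule ds \<sigma> \<longleftrightarrow>
     length \<sigma> = 2 * length ds \<and>
     set \<sigma> \<subseteq> {1..length ds} \<and>
     (\<forall>i\<in>{1..length ds}. \<exists>p q. p < q \<and> q < length \<sigma> \<and>
         {k. k < length \<sigma> \<and> \<sigma> ! k = i} = {p, q} \<and>
         p + 1 \<le> ds ! (i - 1) \<and> q - p \<le> ds ! (i - 1))"

definition two_visits_instance :: "nat list \<Rightarrow> bool" where
  "two_visits_instance ds \<longleftrightarrow> sorted ds \<and> (\<forall>d\<in>set ds. 0 < d)"

definition has_feasible_schedule :: "nat list \<Rightarrow> bool" where
  "has_feasible_schedule ds \<longleftrightarrow> (\<exists>\<sigma>. feasible_schedule ds \<sigma>)"

datatype instr =
    LoadC nat nat
  | Add nat nat nat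
  | Sub nat nat nat
  | Read nat nat
  | Write nat nat
  | Jz nat nat

type_synonym config = "nat \<times> (nat \<Rightarrow> nat)"

fun exec :: "instr \<Rightarrow> config \<Rightarrow> config" where
  "exec (LoadC r k) (pc, M) = (pc + 1, M(r := k))"
| "exec (Add r a b) (pc, M) = (pc + 1, M(r := M a + M b))"
| "exec (Sub r a b) (pc, M) = (pc + 1, M(r := M a - M b))"
| "exec (Read r a) (pc, M) = (pc + 1, M(r := M (M a)))"
| "exec (Write a b) (pc, M) = (pc + 1, M(M a := M b))"
| "exec (Jz a l) (pc, M) = (if M a = 0 then l else pc + 1, M)"

definition halted :: "instr list \<Rightarrow> config \<Rightarrow> bool" where
  "halted P c \<longleftrightarrow> length P \<le> fst c"

definition step :: "instr list \<Rightarrow> config \<Rightarrow> config" where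
  "step P c = (if halted P c then c else exec (P ! fst c) c)"

definition run :: "instr list \<Rightarrow> nat \<Rightarrow> config \<Rightarrow> config" where
  "run P t c = (step P ^^ t) c"

definition input_mem :: "nat list \<Rightarrow> nat \<Rightarrow> nat" where
  "input_mem ds r = (if r = 0 then length ds
                     else if r \<le> length ds then ds ! (r - 1) else 0)"

definition output_schedule :: "nat \<Rightarrow> (nat \<Rightarrow> nat) \<Rightarrow> nat list" where
  "output_schedule n M = map (\<lambda>p. M (p + 1)) [0..<2 * n]"

definition correct_output :: "nat list \<Rightarrow> (nat \<Rightarrow> nat) \<Rightarrow> bool" where
  "correct_output ds M \<longleftrightarrow>
     (M 0 = 1 \<longleftrightarrow> has_feasible_schedule ds) \<and>
     (M 0 = 0 \<longleftrightarrow> \<not> has_feasible_schedule ds) \<and>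
     (has_feasible_schedule ds \<longrightarrow>
        feasible_schedule ds (output_schedule (length ds) M))"

end

theory Submission
  imports Defs
begin


definition dd :: "nat list \<Rightarrow> nat \<Rightarrow> nat" where
  "dd ds i = ds ! (i - 1)"

definition wfi :: "nat list \<Rightarrow> bool" where
  "wfi ds \<longleftrightarrow> sorted_wrt (<) ds \<and> (\<forall>d\<in>set ds. 0 < d)"

lemma dd_pos: "wfi ds \<Longrightarrow> 1 \<le> i \<Longrightarrow> i \<le> length ds \<Longrightarrow> 0 < dd ds i"
  unfolding wfi_def dd_def by (auto simp: Suc_le_eq)

lemma dd_mono: "wfi ds \<Longrightarrow> 1 \<le> i \<Longrightarrow> i < j \<Longrightarrow> j \<le> length ds \<Longrightarrow> dd ds i < dd ds j"
  unfolding wfi_def dd_def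
  by (metis diff_less_mono le_simps(3) less_imp_le_nat order_less_le_trans sorted_wrt_nth_less diff_less One_nat_def zero_less_one le_trans Suc_le_eq)

definition lstep :: "nat list \<Rightarrow> nat \<times> nat \<times> (nat \<Rightarrow> nat) \<times> (nat \<Rightarrow> nat)
    \<Rightarrow> (nat \<times> nat \<times> (nat \<Rightarrow> nat) \<times> (nat \<Rightarrow> nat)) option" where
  "lstep ds st = (case st of (a, b, f, out) \<Rightarrow>
     if b < a \<and> (a = length ds \<or> a + b + 1 < dd ds (a + 1)) then
       (if a + b + 1 - f (b + 1) \<le> dd ds (b + 1) then Some (a, b + 1, f, out(a + b + 1 := b + 1)) else None)
     else Some (a + 1, b, f(a + 1 := a + b + 1), out(a + b + 1 := a + 1)))"

fun lrun :: "nat list \<Rightarrow> nat \<Rightarrow> nat \<times> nat \<times> (nat \<Rightarrow> nat) \<times> (nat \<Rightarrow> nat)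
    \<Rightarrow> (nat \<times> nat \<times> (nat \<Rightarrow> nat) \<times> (nat \<Rightarrow> nat)) option" where
  "lrun ds 0 st = Some st"
| "lrun ds (Suc k) st = (case lstep ds st of None \<Rightarrow> None | Some st' \<Rightarrow> lrun ds k st')"

definition linv :: "nat list \<Rightarrow> nat \<Rightarrow> nat \<Rightarrow> (nat \<Rightarrow> nat) \<Rightarrow> (nat \<Rightarrow> nat) \<Rightarrow> bool" where
  "linv ds a b f out \<longleftrightarrow>
     b \<le> a \<and> a \<le> length ds \<and>
     (\<forall>i. 1 \<le> i \<and> i \<le> a \<longrightarrow> 1 \<le> f i \<and> f i \<le> a + b \<and> f i \<le> dd ds i \<and> out (f i) = i) \<and>
     (\<forall>q. 1 \<le> q \<and> q \<le> a + b \<longrightarrow> 1 \<le> out q \<and> out q \<le> a) \<and>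
     (\<forall>i. 1 \<le> i \<and> i \<le> b \<longrightarrow> (\<exists>s. f i < s \<and> s \<le> a + b \<and> s - f i \<le> dd ds i \<and>
           {q. 1 \<le> q \<and> q \<le> a + b \<and> out q = i} = {f i, s})) \<and>
     (\<forall>i. b < i \<and> i \<le> a \<longrightarrow> {q. 1 \<le> q \<and> q \<le> a + b \<and> out q = i} = {f i}) \<and>
     (a < length ds \<longrightarrow> a + b + 1 \<le> dd ds (a + 1)) \<and>
     (\<forall>i. b + 1 < i \<and> i \<le> a \<longrightarrow> f i = dd ds i) \<and>
     (b < a \<longrightarrow> f (b + 1) = dd ds (b + 1) \<or> (a = b + 1 \<and> f (b + 1) = a + b))"

lemma linv_init: "wfi ds \<Longrightarrow> linv ds 0 0 f out"
  unfolding linv_def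
  by (cases ds) (auto simp: dd_def wfi_def Suc_le_eq)


lemma set_upd: "{q. 1 \<le> q \<and> q \<le> (N::nat) + 1 \<and> (out(N + 1 := x)) q = i} =
   {q. 1 \<le> q \<and> q \<le> N \<and> out q = i} \<union> (if x = i then {N + 1} else {})"
  by (auto simp: le_Suc_eq)

lemma linv_S:
  assumes w: "wfi ds" and I: "linv ds a b f out" and ba: "b < a"
    and c: "a = length ds \<or> a + b + 1 < dd ds (a + 1)"
    and ok: "a + b + 1 - f (b + 1) \<le> dd ds (b + 1)"
  shows "linv ds a (b + 1) f (out(a + b + 1 := b + 1))"
proof -
  let ?out = "out(a + b + 1 := b + 1)"
  note I1 = I[unfolded linv_def, THEN conjunct1] I[unfolded linv_def, THEN conjunct2, THEN conjunct1] and I2 = I[unfolded linv_def, THEN conjunct2, THEN conjunct2, THEN conjunct1, rule_format] and I3 = I[unfolded linv_def, THEN conjunct2, THEN conjunct2, THEN conjunct2, THEN conjunct1, rule_format]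
    and I4 = I[unfolded linv_def, THEN conjunct2, THEN conjunct2, THEN conjunct2, THEN conjunct2, THEN conjunct1, rule_format] and I5 = I[unfolded linv_def, THEN conjunct2, THEN conjunct2, THEN conjunct2, THEN conjunct2, THEN conjunct2, THEN conjunct1, rule_format]
    and I6 = I[unfolded linv_def, THEN conjunct2, THEN conjunct2, THEN conjunct2, THEN conjunct2, THEN conjunct2, THEN conjunct2, THEN conjunct1] and I7 = I[unfolded linv_def, THEN conjunct2, THEN conjunct2, THEN conjunct2, THEN conjunct2, THEN conjunct2, THEN conjunct2, THEN conjunct2, THEN conjunct1, rule_format] and I8 = I[unfolded linv_def, THEN conjunct2, THEN conjunct2, THEN conjunct2, THEN conjunct2, THEN conjunct2, THEN conjunct2, THEN conjunct2, THEN conjunct2]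
  have sets: "\<And>i. {q. 1 \<le> q \<and> q \<le> a + (b + 1) \<and> ?out q = i} =
      {q. 1 \<le> q \<and> q \<le> a + b \<and> out q = i} \<union> (if b + 1 = i then {a + b + 1} else {})"
    using set_upd[of "a + b" out "b + 1"] by (simp add: add.assoc)
  have J2: "\<forall>i. 1 \<le> i \<and> i \<le> a \<longrightarrow> 1 \<le> f i \<and> f i \<le> a + (b + 1) \<and> f i \<le> dd ds i \<and> ?out (f i) = i"
  proof (intro allI impI)
    fix i assume "1 \<le> i \<and> i \<le> a"
    then have "1 \<le> f i \<and> f i \<le> a + b \<and> f i \<le> dd ds i \<and> out (f i) = i" using I2 by blast
    then show "1 \<le> f i \<and> f i \<le> a + (b + 1) \<and> f i \<le> dd ds i \<and> ?out (f i) = i" by simp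
  qed
  have J3: "\<forall>q. 1 \<le> q \<and> q \<le> a + (b + 1) \<longrightarrow> 1 \<le> ?out q \<and> ?out q \<le> a"
  proof (intro allI impI)
    fix q assume q: "1 \<le> q \<and> q \<le> a + (b + 1)"
    show "1 \<le> ?out q \<and> ?out q \<le> a"
    proof (cases "q = a + b + 1")
      case True then show ?thesis using ba by simp
    next
      case False then have "q \<le> a + b" using q by simp
      then show ?thesis using I3[of q] q False by simp
    qed
  qed
  have J4: "\<forall>i. 1 \<le> i \<and> i \<le> b + 1 \<longrightarrow> (\<exists>s. f i < s \<and> s \<le> a + (b + 1) \<and> s - f i \<le> dd ds i \<and>
           {q. 1 \<le> q \<and> q \<le> a + (b + 1) \<and> ?out q = i} = {f i, s})"
  proof (intro allI impI)
    fix i assume i: "1 \<le> i \<and> i \<le> b + 1"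
    show "\<exists>s. f i < s \<and> s \<le> a + (b + 1) \<and> s - f i \<le> dd ds i \<and>
           {q. 1 \<le> q \<and> q \<le> a + (b + 1) \<and> ?out q = i} = {f i, s}"
    proof (cases "i = b + 1")
      case True
      have "f i \<le> a + b" using I2[of i] i ba by auto
      moreover have "{q. 1 \<le> q \<and> q \<le> a + b \<and> out q = i} = {f i}" using I5[of i] True ba by auto
      ultimately show ?thesis using True ok sets[of i]
        by (intro exI[of _ "a + b + 1"]) auto
    next
      case False
      then have "i \<le> b" using i by auto
      then obtain s where "f i < s \<and> s \<le> a + b \<and> s - f i \<le> dd ds i \<and>
           {q. 1 \<le> q \<and> q \<le> a + b \<and> out q = i} = {f i, s}" using I4[of i] i by auto
      then show ?thesis using False sets[of i] by (intro exI[of _ s]) auto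
    qed
  qed
  have J5: "\<forall>i. b + 1 < i \<and> i \<le> a \<longrightarrow> {q. 1 \<le> q \<and> q \<le> a + (b + 1) \<and> ?out q = i} = {f i}"
    using I5 sets by auto
  have J6: "a < length ds \<longrightarrow> a + (b + 1) + 1 \<le> dd ds (a + 1)"
    using c by auto
  have J8: "b + 1 < a \<longrightarrow> f (b + 1 + 1) = dd ds (b + 1 + 1) \<or> (a = b + 1 + 1 \<and> f (b + 1 + 1) = a + (b + 1))"
    using I7[of "b + 2"] by auto
  have J7: "\<forall>i. b + 1 + 1 < i \<and> i \<le> a \<longrightarrow> f i = dd ds i" using I7 by simp
  have J1: "b + 1 \<le> a" using ba by simp
  show ?thesis unfolding linv_def
    using J1 I1(2) J2 J3 J4 J5 J6 J7 J8 by blast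
qed


lemma linv_F:
  assumes w: "wfi ds" and I: "linv ds a b f out" and lt: "a + b < 2 * length ds"
    and c: "\<not> (b < a \<and> (a = length ds \<or> a + b + 1 < dd ds (a + 1)))"
  shows "a < length ds \<and> linv ds (a + 1) b (f(a + 1 := a + b + 1)) (out(a + b + 1 := a + 1))"
proof -
  let ?out = "out(a + b + 1 := a + 1)"
  let ?f = "f(a + 1 := a + b + 1)"
  note I1 = I[unfolded linv_def, THEN conjunct1] I[unfolded linv_def, THEN conjunct2, THEN conjunct1] and I2 = I[unfolded linv_def, THEN conjunct2, THEN conjunct2, THEN conjunct1, rule_format] and I3 = I[unfolded linv_def, THEN conjunct2, THEN conjunct2, THEN conjunct2, THEN conjunct1, rule_format]
    and I4 = I[unfolded linv_def, THEN conjunct2, THEN conjunct2, THEN conjunct2, THEN conjunct2, THEN conjunct1, rule_format] and I5 = I[unfolded linv_def, THEN conjunct2, THEN conjunct2, THEN conjunct2, THEN conjunct2, THEN conjunct2, THEN conjunct1, rule_format]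
    and I6 = I[unfolded linv_def, THEN conjunct2, THEN conjunct2, THEN conjunct2, THEN conjunct2, THEN conjunct2, THEN conjunct2, THEN conjunct1] and I7 = I[unfolded linv_def, THEN conjunct2, THEN conjunct2, THEN conjunct2, THEN conjunct2, THEN conjunct2, THEN conjunct2, THEN conjunct2, THEN conjunct1, rule_format] and I8 = I[unfolded linv_def, THEN conjunct2, THEN conjunct2, THEN conjunct2, THEN conjunct2, THEN conjunct2, THEN conjunct2, THEN conjunct2, THEN conjunct2]
  have an: "a < length ds"
  proof (cases "b < a")
    case True then show ?thesis using c I1 by auto
  next
    case False then show ?thesis using lt I1 by auto
  qed
  have dA: "a + b + 1 \<le> dd ds (a + 1)" using I6 an by simp
  have forced: "b < a \<Longrightarrow> dd ds (a + 1) = a + b + 1" using c dA an by auto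
  have sets: "\<And>i. {q. 1 \<le> q \<and> q \<le> (a + 1) + b \<and> ?out q = i} =
      {q. 1 \<le> q \<and> q \<le> a + b \<and> out q = i} \<union> (if a + 1 = i then {a + b + 1} else {})"
    using set_upd[of "a + b" out "a + 1"] by (simp add: add.assoc add.commute add.left_commute)
  have J2: "\<forall>i. 1 \<le> i \<and> i \<le> a + 1 \<longrightarrow> 1 \<le> ?f i \<and> ?f i \<le> a + 1 + b \<and> ?f i \<le> dd ds i \<and> ?out (?f i) = i"
  proof (intro allI impI)
    fix i assume i: "1 \<le> i \<and> i \<le> a + 1"
    show "1 \<le> ?f i \<and> ?f i \<le> a + 1 + b \<and> ?f i \<le> dd ds i \<and> ?out (?f i) = i"
    proof (cases "i = a + 1")
      case True then show ?thesis using dA by simp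
    next
      case False
      then have "1 \<le> f i \<and> f i \<le> a + b \<and> f i \<le> dd ds i \<and> out (f i) = i" using I2[of i] i by simp
      then show ?thesis using False by simp
    qed
  qed
  have J3: "\<forall>q. 1 \<le> q \<and> q \<le> a + 1 + b \<longrightarrow> 1 \<le> ?out q \<and> ?out q \<le> a + 1"
  proof (intro allI impI)
    fix q assume q: "1 \<le> q \<and> q \<le> a + 1 + b"
    show "1 \<le> ?out q \<and> ?out q \<le> a + 1"
    proof (cases "q = a + b + 1")
      case True then show ?thesis by simp
    next
      case False then have "q \<le> a + b" using q by simp
      then show ?thesis using I3[of q] q False by simp
    qed
  qed
  have J4: "\<forall>i. 1 \<le> i \<and> i \<le> b \<longrightarrow> (\<exists>s. ?f i < s \<and> s \<le> a + 1 + b \<and> s - ?f i \<le> dd ds i \<and>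
           {q. 1 \<le> q \<and> q \<le> a + 1 + b \<and> ?out q = i} = {?f i, s})"
  proof (intro allI impI)
    fix i assume i: "1 \<le> i \<and> i \<le> b"
    then obtain s where s: "f i < s \<and> s \<le> a + b \<and> s - f i \<le> dd ds i \<and>
           {q. 1 \<le> q \<and> q \<le> a + b \<and> out q = i} = {f i, s}" using I4[of i] by auto
    have ne: "i \<noteq> a + 1" using i I1 by simp
    show "\<exists>s. ?f i < s \<and> s \<le> a + 1 + b \<and> s - ?f i \<le> dd ds i \<and>
           {q. 1 \<le> q \<and> q \<le> a + 1 + b \<and> ?out q = i} = {?f i, s}"
      using s ne sets[of i] by (intro exI[of _ s]) auto
  qed
  have J5: "\<forall>i. b < i \<and> i \<le> a + 1 \<longrightarrow> {q. 1 \<le> q \<and> q \<le> a + 1 + b \<and> ?out q = i} = {?f i}"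
  proof (intro allI impI)
    fix i assume i: "b < i \<and> i \<le> a + 1"
    show "{q. 1 \<le> q \<and> q \<le> a + 1 + b \<and> ?out q = i} = {?f i}"
    proof (cases "i = a + 1")
      case True
      have emp: "{q. 1 \<le> q \<and> q \<le> a + b \<and> out q = i} = {}" using I3 True by fastforce
      show ?thesis unfolding sets[of i] emp using True by simp
    next
      case False
      then show ?thesis using I5[of i] i sets[of i] by simp
    qed
  qed
  have J6: "a + 1 < length ds \<longrightarrow> a + 1 + b + 1 \<le> dd ds (a + 1 + 1)"
  proof
    assume "a + 1 < length ds"
    then have "dd ds (a + 1) < dd ds (a + 1 + 1)" using dd_mono[OF w, of "a + 1" "a + 2"] by simp
    then show "a + 1 + b + 1 \<le> dd ds (a + 1 + 1)" using dA by simp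
  qed
  have J7: "\<forall>i. b + 1 < i \<and> i \<le> a + 1 \<longrightarrow> ?f i = dd ds i"
  proof (intro allI impI)
    fix i assume i: "b + 1 < i \<and> i \<le> a + 1"
    show "?f i = dd ds i"
    proof (cases "i = a + 1")
      case True then have "b < a" using i by simp
      then show ?thesis using forced True by simp
    next
      case False then show ?thesis using I7[of i] i by simp
    qed
  qed
  have J8: "b < a + 1 \<longrightarrow> ?f (b + 1) = dd ds (b + 1) \<or> (a + 1 = b + 1 \<and> ?f (b + 1) = a + 1 + b)"
  proof
    assume "b < a + 1"
    show "?f (b + 1) = dd ds (b + 1) \<or> (a + 1 = b + 1 \<and> ?f (b + 1) = a + 1 + b)"
    proof (cases "b = a")
      case True then show ?thesis by simp
    next
      case False
      then have ba: "b < a" using I1 by simp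
      then have fb: "?f (b + 1) = f (b + 1)" by simp
      show ?thesis
      proof (cases "f (b + 1) = dd ds (b + 1)")
        case True then show ?thesis using fb by simp
      next
        case False
        then have ab: "a = b + 1" and fv: "f (b + 1) = a + b" using I8 ba by auto
        have "dd ds (b + 1) < dd ds (a + 1)" using dd_mono[OF w, of "b + 1" "a + 1"] ba an by simp
        then have "dd ds (b + 1) \<le> a + b" using forced[OF ba] by simp
        moreover have "f (b + 1) \<le> dd ds (b + 1)" using I2[of "b + 1"] ba by simp
        ultimately show ?thesis using fv fb by simp
      qed
    qed
  qed
  have J1: "b \<le> a + 1" "a + 1 \<le> length ds" using I1 an by auto
  have "linv ds (a + 1) b ?f ?out" unfolding linv_def
    using J1 J2 J3 J4 J5 J6 J7 J8 by blast
  then show ?thesis using an by simp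
qed


lemma count_bound:
  assumes fs: "feasible_schedule ds \<sigma>"
    and A: "A \<subseteq> {1..length ds}" and J: "J \<subseteq> {1..length ds}"
    and dA: "\<forall>i\<in>A. dd ds i \<le> T" and dJ: "\<forall>i\<in>J. 2 * dd ds i \<le> T"
  shows "card A + card J \<le> T"
proof -
  let ?S = "\<lambda>i. {k. k < length \<sigma> \<and> \<sigma> ! k = i}"
  define fp where "fp i = Min (?S i)" for i
  define sp where "sp i = Max (?S i)" for i
  have props: "fp i < sp i \<and> \<sigma> ! fp i = i \<and> \<sigma> ! sp i = i \<and> fp i + 1 \<le> dd ds i \<and> sp i - fp i \<le> dd ds i"
    if i: "i \<in> {1..length ds}" for i
  proof -
    obtain p q where pq: "p < q" "q < length \<sigma>" "?S i = {p, q}" "p + 1 \<le> ds ! (i - 1)" "q - p \<le> ds ! (i - 1)"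
      using fs i unfolding feasible_schedule_def by blast
    have "fp i = p" unfolding fp_def using pq by simp
    moreover have "sp i = q" unfolding sp_def using pq by simp
    moreover have "p \<in> ?S i" "q \<in> ?S i" using pq(3) by auto
    then have "\<sigma> ! p = i" "\<sigma> ! q = i" by auto
    ultimately show ?thesis using pq by (simp add: dd_def)
  qed
  have injA: "inj_on fp A"
    by (rule inj_onI) (metis A props subsetD)
  have injJ: "inj_on sp J"
    by (rule inj_onI) (metis J props subsetD)
  have disj: "fp ` A \<inter> sp ` J = {}"
  proof (rule ccontr)
    assume "fp ` A \<inter> sp ` J \<noteq> {}"
    then obtain x y where x: "x \<in> A" and y: "y \<in> J" and e: "fp x = sp y" by blast
    have "x = y" using props[of x] props[of y] x y A J e by (metis subsetD)
    then show False using props[of x] x A e by (metis less_irrefl subsetD)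
  qed
  have sub: "fp ` A \<union> sp ` J \<subseteq> {..<T}"
  proof
    fix z assume "z \<in> fp ` A \<union> sp ` J"
    then show "z \<in> {..<T}"
    proof
      assume "z \<in> fp ` A"
      then obtain x where x: "x \<in> A" "z = fp x" by blast
      then have "x \<in> {1..length ds}" using A by auto
      then have "fp x + 1 \<le> dd ds x" using props[of x] by simp
      then show ?thesis using x dA by auto
    next
      assume "z \<in> sp ` J"
      then obtain x where x: "x \<in> J" "z = sp x" by blast
      then have "fp x + 1 \<le> dd ds x" "sp x - fp x \<le> dd ds x" "fp x < sp x" "2 * dd ds x \<le> T"
        using props[of x] J dJ subsetD[OF J x(1)] x(1) by auto
      then show ?thesis using x by auto
    qed
  qed
  have fin: "finite A" "finite J" using A J finite_subset by blast+
  have "card A + card J = card (fp ` A) + card (sp ` J)"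
    using card_image[OF injA] card_image[OF injJ] by simp
  also have "\<dots> = card (fp ` A \<union> sp ` J)"
    using card_Un_disjoint[of "fp ` A" "sp ` J"] fin disj by simp
  also have "\<dots> \<le> card {..<T}" using sub by (intro card_mono) auto
  finally show ?thesis by simp
qed


lemma dd_mono_le: "wfi ds \<Longrightarrow> 1 \<le> i \<Longrightarrow> i \<le> j \<Longrightarrow> j \<le> length ds \<Longrightarrow> dd ds i \<le> dd ds j"
  using dd_mono[of ds i j] by (cases "i = j") auto

lemma lstep_None_infeasible:
  assumes w: "wfi ds" and I: "linv ds a b f out" and N: "lstep ds (a, b, f, out) = None"
  shows "\<not> has_feasible_schedule ds"
proof
  assume "has_feasible_schedule ds"
  then obtain \<sigma> where fs: "feasible_schedule ds \<sigma>" unfolding has_feasible_schedule_def by blast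
  note I1 = I[unfolded linv_def, THEN conjunct1] I[unfolded linv_def, THEN conjunct2, THEN conjunct1]
    and I2 = I[unfolded linv_def, THEN conjunct2, THEN conjunct2, THEN conjunct1, rule_format]
    and I7 = I[unfolded linv_def, THEN conjunct2, THEN conjunct2, THEN conjunct2, THEN conjunct2, THEN conjunct2, THEN conjunct2, THEN conjunct2, THEN conjunct1, rule_format]
    and I8 = I[unfolded linv_def, THEN conjunct2, THEN conjunct2, THEN conjunct2, THEN conjunct2, THEN conjunct2, THEN conjunct2, THEN conjunct2, THEN conjunct2]
  have br: "b < a" and bad: "\<not> (a + b + 1 - f (b + 1) \<le> dd ds (b + 1))"
    using N unfolding lstep_def by (auto split: if_splits)
  have pos: "0 < dd ds (b + 1)" using dd_pos[OF w, of "b + 1"] br I1 by simp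
  have fb: "f (b + 1) = dd ds (b + 1)"
  proof (rule ccontr)
    assume "f (b + 1) \<noteq> dd ds (b + 1)"
    then have "f (b + 1) = a + b" using I8 br by auto
    then show False using bad pos by simp
  qed
  define T where "T = a + b"
  have T2: "2 * dd ds (b + 1) \<le> T" using bad fb unfolding T_def by simp
  have dA: "\<forall>i\<in>{1..a}. dd ds i \<le> T"
  proof
    fix i assume i: "i \<in> {1..a}"
    show "dd ds i \<le> T"
    proof (cases "i \<le> b + 1")
      case True
      then have "dd ds i \<le> dd ds (b + 1)" using dd_mono_le[OF w, of i "b + 1"] i br I1 by simp
      then show ?thesis using T2 by simp
    next
      case False
      then have "f i = dd ds i" using I7[of i] i by simp
      moreover have "f i \<le> a + b" using I2[of i] i by simp
      ultimately show ?thesis unfolding T_def by simp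
    qed
  qed
  have dJ: "\<forall>i\<in>{1..b + 1}. 2 * dd ds i \<le> T"
  proof
    fix i assume i: "i \<in> {1..b + 1}"
    then have "dd ds i \<le> dd ds (b + 1)" using dd_mono_le[OF w, of i "b + 1"] br I1 by simp
    then show "2 * dd ds i \<le> T" using T2 by simp
  qed
  have "card {1..a} + card {1..b + 1} \<le> T"
    by (rule count_bound[OF fs _ _ dA dJ]) (use I1 br in auto)
  then show False unfolding T_def by simp
qed

lemma lstep_Some:
  assumes w: "wfi ds" and I: "linv ds a b f out" and lt: "a + b < 2 * length ds"
    and S: "lstep ds (a, b, f, out) = Some (a', b', f', out')"
  shows "linv ds a' b' f' out' \<and> a' + b' = a + b + 1"
proof (cases "b < a \<and> (a = length ds \<or> a + b + 1 < dd ds (a + 1))")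
  case True
  then have ok: "a + b + 1 - f (b + 1) \<le> dd ds (b + 1)"
    and e: "a' = a" "b' = b + 1" "f' = f" "out' = out(a + b + 1 := b + 1)"
    using S unfolding lstep_def by (auto split: if_splits)
  show ?thesis using linv_S[OF w I _ _ ok] True e by simp
next
  case False
  then have e: "a' = a + 1" "b' = b" "f' = f(a + 1 := a + b + 1)" "out' = out(a + b + 1 := a + 1)"
    using S unfolding lstep_def by (auto split: if_splits)
  show ?thesis using linv_F[OF w I lt False] e by simp
qed

lemma lrun_Some:
  "wfi ds \<Longrightarrow> linv ds a b f out \<Longrightarrow> a + b + k \<le> 2 * length ds \<Longrightarrow>
   lrun ds k (a, b, f, out) = Some (a', b', f', out') \<Longrightarrow> linv ds a' b' f' out' \<and> a' + b' = a + b + k"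
proof (induction k arbitrary: a b f out)
  case 0 then show ?case by simp
next
  case (Suc k)
  then obtain a1 b1 f1 out1 where s: "lstep ds (a, b, f, out) = Some (a1, b1, f1, out1)"
    by (cases "lstep ds (a, b, f, out)") auto
  have h: "linv ds a1 b1 f1 out1 \<and> a1 + b1 = a + b + 1" using lstep_Some[OF Suc.prems(1,2) _ s] Suc.prems(3) by simp
  have "lrun ds k (a1, b1, f1, out1) = Some (a', b', f', out')" using Suc.prems(4) s by simp
  then show ?case using Suc.IH[of a1 b1 f1 out1] h Suc.prems by simp
qed

lemma lrun_None:
  "wfi ds \<Longrightarrow> linv ds a b f out \<Longrightarrow> a + b + k \<le> 2 * length ds \<Longrightarrow>
   lrun ds k (a, b, f, out) = None \<Longrightarrow> \<not> has_feasible_schedule ds"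
proof (induction k arbitrary: a b f out)
  case 0 then show ?case by simp
next
  case (Suc k)
  show ?case
  proof (cases "lstep ds (a, b, f, out)")
    case None then show ?thesis using lstep_None_infeasible[OF Suc.prems(1,2)] by simp
  next
    case (Some st)
    then obtain a1 b1 f1 out1 where s: "lstep ds (a, b, f, out) = Some (a1, b1, f1, out1)"
      by (cases st) auto
    have h: "linv ds a1 b1 f1 out1 \<and> a1 + b1 = a + b + 1" using lstep_Some[OF Suc.prems(1,2) _ s] Suc.prems(3) by simp
    have "lrun ds k (a1, b1, f1, out1) = None" using Suc.prems(4) s by simp
    then show ?thesis using Suc.IH[of a1 b1 f1 out1] h Suc.prems by simp
  qed
qed

lemma final_feasible:
  assumes w: "wfi ds" and I: "linv ds a b f out" and e: "a + b = 2 * length ds"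
  shows "feasible_schedule ds (map (\<lambda>q. out (q + 1)) [0..<2 * length ds])"
proof -
  note I1 = I[unfolded linv_def, THEN conjunct1] I[unfolded linv_def, THEN conjunct2, THEN conjunct1]
    and I2 = I[unfolded linv_def, THEN conjunct2, THEN conjunct2, THEN conjunct1, rule_format]
    and I3 = I[unfolded linv_def, THEN conjunct2, THEN conjunct2, THEN conjunct2, THEN conjunct1, rule_format]
    and I4 = I[unfolded linv_def, THEN conjunct2, THEN conjunct2, THEN conjunct2, THEN conjunct2, THEN conjunct1, rule_format]
  let ?n = "length ds"
  let ?\<sigma> = "map (\<lambda>q. out (q + 1)) [0..<2 * ?n]"
  have ab: "a = ?n" "b = ?n" using I1 e by auto
  have set: "set ?\<sigma> \<subseteq> {1..?n}"
  proof
    fix x assume "x \<in> set ?\<sigma>"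
    then obtain q where q: "q < 2 * ?n" "x = out (q + 1)" by auto
    then show "x \<in> {1..?n}" using I3[of "q + 1"] ab by simp
  qed
  have vis: "\<exists>p q. p < q \<and> q < length ?\<sigma> \<and>
         {k. k < length ?\<sigma> \<and> ?\<sigma> ! k = i} = {p, q} \<and>
         p + 1 \<le> ds ! (i - 1) \<and> q - p \<le> ds ! (i - 1)" if i: "i \<in> {1..?n}" for i
  proof -
    obtain s where s: "f i < s" "s \<le> a + b" "s - f i \<le> dd ds i"
       "{q. 1 \<le> q \<and> q \<le> a + b \<and> out q = i} = {f i, s}"
      using I4[of i] i ab by auto
    have fi: "1 \<le> f i" "f i \<le> dd ds i" using I2[of i] i ab by auto
    have "{k. k < length ?\<sigma> \<and> ?\<sigma> ! k = i} = {f i - 1, s - 1}"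
    proof (rule set_eqI)
      fix k
      have "k < length ?\<sigma> \<and> ?\<sigma> ! k = i \<longleftrightarrow> (k + 1) \<in> {q. 1 \<le> q \<and> q \<le> a + b \<and> out q = i}"
        using e by auto
      also have "\<dots> \<longleftrightarrow> k + 1 = f i \<or> k + 1 = s" using s(4) by simp
      also have "\<dots> \<longleftrightarrow> k \<in> {f i - 1, s - 1}" using fi s(1) by auto
      finally show "k \<in> {k. k < length ?\<sigma> \<and> ?\<sigma> ! k = i} \<longleftrightarrow> k \<in> {f i - 1, s - 1}" by simp
    qed
    then show ?thesis using s fi e
      by (intro exI[of _ "f i - 1"] exI[of _ "s - 1"]) (auto simp: dd_def)
  qed
  show ?thesis unfolding feasible_schedule_def using set vis by simp
qed


definition prog :: "instr list" where
  "prog = [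
    Jz 13 36,
    Add 0 0 1,
    Write 0 1,
    LoadC 1 1,
    Add 0 0 1,
    Write 0 2,
    Add 0 0 1,
    Write 0 3,
    Add 0 0 1,
    Write 0 4,
    Add 0 0 1,
    Write 0 5,
    Add 0 0 1,
    Write 0 6,
    Add 0 0 1,
    Write 0 7,
    Add 0 0 1,
    Write 0 8,
    Add 0 0 1,
    Write 0 9,
    Add 0 0 1,
    Write 0 10,
    Add 0 0 1,
    Write 0 11,
    Add 0 0 1,
    Write 0 12,
    Add 0 0 1,
    Write 0 13,
    LoadC 2 12,
    Sub 2 0 2,
    Read 3 2,
    Sub 3 2 3,
    Add 5 0 1,
    Write 5 3,
    LoadC 8 0,
    Jz 8 63,
    LoadC 13 26,
    Write 13 1,
    LoadC 13 27,
    Write 13 2,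
    LoadC 13 28,
    Write 13 3,
    LoadC 13 29,
    Write 13 4,
    LoadC 13 30,
    Write 13 5,
    LoadC 13 31,
    Write 13 6,
    LoadC 13 32,
    Write 13 7,
    LoadC 13 33,
    Write 13 8,
    LoadC 13 34,
    Write 13 9,
    LoadC 13 35,
    Write 13 10,
    LoadC 13 36,
    Write 13 11,
    LoadC 13 37,
    Write 13 12,
    LoadC 13 39,
    Write 13 0,
    LoadC 2 26,
    LoadC 7 1,
    LoadC 8 0,
    LoadC 6 13,
    Add 4 2 6,
    Read 3 4,
    LoadC 1 1,
    LoadC 6 14,
    Sub 5 6 1,
    Jz 5 79,
    Add 5 2 1,
    Sub 5 5 7,
    Read 5 5,
    Add 6 4 1,
    Write 6 5,
    Add 1 1 7,
    Jz 8 69,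
    Add 6 3 7,
    Sub 5 6 1,
    Jz 5 87,
    Read 5 1,
    Add 6 4 1,
    Write 6 5,
    Add 1 1 7,
    Jz 8 79,
    LoadC 9 0,
    LoadC 10 0,
    LoadC 11 1,
    Add 12 4 3,
    Add 13 12 3,
    Add 2 3 3,
    Add 2 2 7,
    Sub 5 2 11,
    Jz 5 129,
    Sub 5 9 10,
    Jz 5 119,
    Sub 5 3 9,
    Jz 5 105,
    Add 6 4 9,
    Add 6 6 7,
    Read 5 6,
    Sub 5 5 11,
    Jz 5 119,
    Add 1 10 7,
    Add 6 12 1,
    Read 5 6,
    Sub 5 11 5,
    Add 6 4 1,
    Read 6 6,
    Sub 5 5 6,
    Jz 5 114,
    Jz 8 127,
    Add 6 13 11,
    Write 6 1,
    Add 10 10 7,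
    Add 11 11 7,
    Jz 8 94,
    Add 1 9 7,
    Add 6 12 1,
    Write 6 11,
    Add 6 13 11,
    Write 6 1,
    Add 9 9 7,
    Add 11 11 7,
    Jz 8 94,
    LoadC 0 0,
    Jz 0 166,
    Add 1 3 3,
    LoadC 2 13,
    Sub 5 1 2,
    Jz 5 138,
    Add 6 13 1,
    Read 5 6,
    Write 1 5,
    Sub 1 1 7,
    Jz 8 131,
    Add 0 13 2,
    LoadC 1 1,
    Read 13 0,
    Sub 0 0 1,
    Read 12 0,
    Sub 0 0 1,
    Read 11 0,
    Sub 0 0 1,
    Read 10 0,
    Sub 0 0 1,
    Read 9 0,
    Sub 0 0 1,
    Read 8 0,
    Sub 0 0 1,
    Read 7 0,
    Sub 0 0 1,
    Read 6 0,
    Sub 0 0 1,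
    Read 5 0,
    Sub 0 0 1,
    Read 4 0,
    Sub 0 0 1,
    Read 3 0,
    Sub 0 0 1,
    Read 2 0,
    Sub 0 0 1,
    Read 1 0,
    LoadC 0 1]"

lemma prog_length[simp]: "length prog = 166"
  by (simp add: prog_def)

lemma prog_nth[simp]:
  "prog ! 0 = Jz 13 36"
  "prog ! 1 = Add 0 0 1"
  "prog ! 2 = Write 0 1"
  "prog ! 3 = LoadC 1 1"
  "prog ! 4 = Add 0 0 1"
  "prog ! 5 = Write 0 2"
  "prog ! 6 = Add 0 0 1"
  "prog ! 7 = Write 0 3"
  "prog ! 8 = Add 0 0 1"
  "prog ! 9 = Write 0 4"
  "prog ! 10 = Add 0 0 1"
  "prog ! 11 = Write 0 5"
  "prog ! 12 = Add 0 0 1"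
  "prog ! 13 = Write 0 6"
  "prog ! 14 = Add 0 0 1"
  "prog ! 15 = Write 0 7"
  "prog ! 16 = Add 0 0 1"
  "prog ! 17 = Write 0 8"
  "prog ! 18 = Add 0 0 1"
  "prog ! 19 = Write 0 9"
  "prog ! 20 = Add 0 0 1"
  "prog ! 21 = Write 0 10"
  "prog ! 22 = Add 0 0 1"
  "prog ! 23 = Write 0 11"
  "prog ! 24 = Add 0 0 1"
  "prog ! 25 = Write 0 12"
  "prog ! 26 = Add 0 0 1"
  "prog ! 27 = Write 0 13"
  "prog ! 28 = LoadC 2 12"
  "prog ! 29 = Sub 2 0 2"
  "prog ! 30 = Read 3 2"
  "prog ! 31 = Sub 3 2 3"
  "prog ! 32 = Add 5 0 1"
  "prog ! 33 = Write 5 3"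
  "prog ! 34 = LoadC 8 0"
  "prog ! 35 = Jz 8 63"
  "prog ! 36 = LoadC 13 26"
  "prog ! 37 = Write 13 1"
  "prog ! 38 = LoadC 13 27"
  "prog ! 39 = Write 13 2"
  "prog ! 40 = LoadC 13 28"
  "prog ! 41 = Write 13 3"
  "prog ! 42 = LoadC 13 29"
  "prog ! 43 = Write 13 4"
  "prog ! 44 = LoadC 13 30"
  "prog ! 45 = Write 13 5"
  "prog ! 46 = LoadC 13 31"
  "prog ! 47 = Write 13 6"
  "prog ! 48 = LoadC 13 32"
  "prog ! 49 = Write 13 7"
  "prog ! 50 = LoadC 13 33"
  "prog ! 51 = Write 13 8"
  "prog ! 52 = LoadC 13 34"
  "prog ! 53 = Write 13 9"
  "prog ! 54 = LoadC 13 35"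
  "prog ! 55 = Write 13 10"
  "prog ! 56 = LoadC 13 36"
  "prog ! 57 = Write 13 11"
  "prog ! 58 = LoadC 13 37"
  "prog ! 59 = Write 13 12"
  "prog ! 60 = LoadC 13 39"
  "prog ! 61 = Write 13 0"
  "prog ! 62 = LoadC 2 26"
  "prog ! 63 = LoadC 7 1"
  "prog ! 64 = LoadC 8 0"
  "prog ! 65 = LoadC 6 13"
  "prog ! 66 = Add 4 2 6"
  "prog ! 67 = Read 3 4"
  "prog ! 68 = LoadC 1 1"
  "prog ! 69 = LoadC 6 14"
  "prog ! 70 = Sub 5 6 1"
  "prog ! 71 = Jz 5 79"
  "prog ! 72 = Add 5 2 1"
  "prog ! 73 = Sub 5 5 7"
  "prog ! 74 = Read 5 5"
  "prog ! 75 = Add 6 4 1"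
  "prog ! 76 = Write 6 5"
  "prog ! 77 = Add 1 1 7"
  "prog ! 78 = Jz 8 69"
  "prog ! 79 = Add 6 3 7"
  "prog ! 80 = Sub 5 6 1"
  "prog ! 81 = Jz 5 87"
  "prog ! 82 = Read 5 1"
  "prog ! 83 = Add 6 4 1"
  "prog ! 84 = Write 6 5"
  "prog ! 85 = Add 1 1 7"
  "prog ! 86 = Jz 8 79"
  "prog ! 87 = LoadC 9 0"
  "prog ! 88 = LoadC 10 0"
  "prog ! 89 = LoadC 11 1"
  "prog ! 90 = Add 12 4 3"
  "prog ! 91 = Add 13 12 3"
  "prog ! 92 = Add 2 3 3"
  "prog ! 93 = Add 2 2 7"
  "prog ! 94 = Sub 5 2 11"
  "prog ! 95 = Jz 5 129"
  "prog ! 96 = Sub 5 9 10"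
  "prog ! 97 = Jz 5 119"
  "prog ! 98 = Sub 5 3 9"
  "prog ! 99 = Jz 5 105"
  "prog ! 100 = Add 6 4 9"
  "prog ! 101 = Add 6 6 7"
  "prog ! 102 = Read 5 6"
  "prog ! 103 = Sub 5 5 11"
  "prog ! 104 = Jz 5 119"
  "prog ! 105 = Add 1 10 7"
  "prog ! 106 = Add 6 12 1"
  "prog ! 107 = Read 5 6"
  "prog ! 108 = Sub 5 11 5"
  "prog ! 109 = Add 6 4 1"
  "prog ! 110 = Read 6 6"
  "prog ! 111 = Sub 5 5 6"
  "prog ! 112 = Jz 5 114"
  "prog ! 113 = Jz 8 127"
  "prog ! 114 = Add 6 13 11"
  "prog ! 115 = Write 6 1"
  "prog ! 116 = Add 10 10 7"
  "prog ! 117 = Add 11 11 7"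
  "prog ! 118 = Jz 8 94"
  "prog ! 119 = Add 1 9 7"
  "prog ! 120 = Add 6 12 1"
  "prog ! 121 = Write 6 11"
  "prog ! 122 = Add 6 13 11"
  "prog ! 123 = Write 6 1"
  "prog ! 124 = Add 9 9 7"
  "prog ! 125 = Add 11 11 7"
  "prog ! 126 = Jz 8 94"
  "prog ! 127 = LoadC 0 0"
  "prog ! 128 = Jz 0 166"
  "prog ! 129 = Add 1 3 3"
  "prog ! 130 = LoadC 2 13"
  "prog ! 131 = Sub 5 1 2"
  "prog ! 132 = Jz 5 138"
  "prog ! 133 = Add 6 13 1"
  "prog ! 134 = Read 5 6"
  "prog ! 135 = Write 1 5"
  "prog ! 136 = Sub 1 1 7"
  "prog ! 137 = Jz 8 131"
  "prog ! 138 = Add 0 13 2"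
  "prog ! 139 = LoadC 1 1"
  "prog ! 140 = Read 13 0"
  "prog ! 141 = Sub 0 0 1"
  "prog ! 142 = Read 12 0"
  "prog ! 143 = Sub 0 0 1"
  "prog ! 144 = Read 11 0"
  "prog ! 145 = Sub 0 0 1"
  "prog ! 146 = Read 10 0"
  "prog ! 147 = Sub 0 0 1"
  "prog ! 148 = Read 9 0"
  "prog ! 149 = Sub 0 0 1"
  "prog ! 150 = Read 8 0"
  "prog ! 151 = Sub 0 0 1"
  "prog ! 152 = Read 7 0"
  "prog ! 153 = Sub 0 0 1"
  "prog ! 154 = Read 6 0"
  "prog ! 155 = Sub 0 0 1"
  "prog ! 156 = Read 5 0"
  "prog ! 157 = Sub 0 0 1"
  "prog ! 158 = Read 4 0"
  "prog ! 159 = Sub 0 0 1"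
  "prog ! 160 = Read 3 0"
  "prog ! 161 = Sub 0 0 1"
  "prog ! 162 = Read 2 0"
  "prog ! 163 = Sub 0 0 1"
  "prog ! 164 = Read 1 0"
  "prog ! 165 = LoadC 0 1"
  by (simp_all add: prog_def)

lemma prog_nth_Suc0[simp]: "prog ! Suc 0 = Add 0 0 1"
  by (simp add: prog_def)

lemma run_0[simp]: "run P 0 c = c"
  by (simp add: run_def)

lemma run_Suc: "run P (Suc t) c = run P t (step P c)"
  by (simp only: run_def funpow_Suc_right comp_def)

lemma run_num: "run P (numeral k) c = run P (pred_numeral k) (step P c)"
  by (simp add: numeral_eq_Suc run_Suc)

lemma run_add: "run P (t1 + t2) c = run P t2 (run P t1 c)"
  by (simp only: run_def add.commute[of t1 t2] funpow_add comp_def)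

lemma step_prog: "pc < length prog \<Longrightarrow> step prog (pc, M) = exec (prog ! pc) (pc, M)"
  by (simp add: step_def halted_def)

lemma halted_run: "halted P c \<Longrightarrow> run P t c = c"
  by (induction t) (simp_all add: run_Suc step_def)


definition MI :: "nat list \<Rightarrow> nat \<Rightarrow> nat \<Rightarrow> nat \<Rightarrow> (nat \<Rightarrow> nat) \<Rightarrow> (nat \<Rightarrow> nat) \<Rightarrow> (nat \<Rightarrow> nat) \<Rightarrow> bool" where
  "MI ds B a b f out M \<longleftrightarrow>
     M 2 = 2 * length ds + 1 \<and> M 3 = length ds \<and> M 4 = B \<and> M 7 = 1 \<and> M 8 = 0 \<and>
     M 9 = a \<and> M 10 = b \<and> M 11 = a + b + 1 \<and> M 12 = B + length ds \<and> M 13 = B + 2 * length ds \<and>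
     13 < B \<and> b \<le> a \<and> a \<le> length ds \<and>
     (\<forall>i. 1 \<le> i \<and> i \<le> length ds \<longrightarrow> M (B + i) = dd ds i) \<and>
     (\<forall>j. 1 \<le> j \<and> j \<le> a \<longrightarrow> M (B + length ds + j) = f j) \<and>
     (\<forall>q. 1 \<le> q \<and> q \<le> a + b \<longrightarrow> M (B + 2 * length ds + q) = out q)"

lemma iterF1:
  assumes I: "MI ds B a b f out M" and lt: "a + b < 2 * length ds" and e: "b = a"
  shows "\<exists>M'. run prog 12 (94, M) = (94, M') \<and>
           MI ds B (a + 1) b (f(a + 1 := a + b + 1)) (out(a + b + 1 := a + 1)) M'"
proof -
  have r: "M 2 = 2 * length ds + 1" "M 3 = length ds" "M 4 = B" "M 7 = 1" "M 8 = 0"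
     "M 9 = a" "M 10 = b" "M 11 = a + b + 1" "M 12 = B + length ds" "M 13 = B + 2 * length ds"
     "13 < B" "b \<le> a" "a \<le> length ds"
    and arr: "\<forall>i. 1 \<le> i \<and> i \<le> length ds \<longrightarrow> M (B + i) = dd ds i"
      "\<forall>j. 1 \<le> j \<and> j \<le> a \<longrightarrow> M (B + length ds + j) = f j"
      "\<forall>q. 1 \<le> q \<and> q \<le> a + b \<longrightarrow> M (B + 2 * length ds + q) = out q"
    using I unfolding MI_def by simp_all
  have x: "a < length ds \<Longrightarrow> M (Suc (B + a)) = dd ds (Suc a)"
     "b < a \<Longrightarrow> M (Suc (B + length ds + b)) = f (Suc b)"
     "b < length ds \<Longrightarrow> M (Suc (B + b)) = dd ds (Suc b)"
    using arr r by (auto dest: spec[of _ "Suc a"] spec[of _ "Suc b"])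
  show ?thesis
    using r arr lt e x unfolding MI_def
    by (simp add: fun_upd_apply run_Suc run_num step_prog)
qed


lemma iterF2:
  assumes I: "MI ds B a b f out M" and lt: "a + b < 2 * length ds" and e: "b < a" "a < length ds" "dd ds (a + 1) \<le> a + b + 1"
  shows "\<exists>M'. run prog 19 (94, M) = (94, M') \<and>
           MI ds B (a + 1) b (f(a + 1 := a + b + 1)) (out(a + b + 1 := a + 1)) M'"
proof -
  have r: "M 2 = 2 * length ds + 1" "M 3 = length ds" "M 4 = B" "M 7 = 1" "M 8 = 0"
     "M 9 = a" "M 10 = b" "M 11 = a + b + 1" "M 12 = B + length ds" "M 13 = B + 2 * length ds"
     "13 < B" "b \<le> a" "a \<le> length ds"
    and arr: "\<forall>i. 1 \<le> i \<and> i \<le> length ds \<longrightarrow> M (B + i) = dd ds i"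
      "\<forall>j. 1 \<le> j \<and> j \<le> a \<longrightarrow> M (B + length ds + j) = f j"
      "\<forall>q. 1 \<le> q \<and> q \<le> a + b \<longrightarrow> M (B + 2 * length ds + q) = out q"
    using I unfolding MI_def by simp_all
  have x: "a < length ds \<Longrightarrow> M (Suc (B + a)) = dd ds (Suc a)"
     "b < a \<Longrightarrow> M (Suc (B + length ds + b)) = f (Suc b)"
     "b < length ds \<Longrightarrow> M (Suc (B + b)) = dd ds (Suc b)"
    using arr r by (auto dest: spec[of _ "Suc a"] spec[of _ "Suc b"])
  show ?thesis
    using r arr lt e x unfolding MI_def
    by (simp add: fun_upd_apply run_Suc run_num step_prog)
qed


lemma iterS1:
  assumes I: "MI ds B a b f out M" and lt: "a + b < 2 * length ds" and e: "b < a" "a = length ds" "a + b + 1 - f (b + 1) \<le> dd ds (b + 1)"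
  shows "\<exists>M'. run prog 19 (94, M) = (94, M') \<and>
           MI ds B a (b + 1) f (out(a + b + 1 := b + 1)) M'"
proof -
  have r: "M 2 = 2 * length ds + 1" "M 3 = length ds" "M 4 = B" "M 7 = 1" "M 8 = 0"
     "M 9 = a" "M 10 = b" "M 11 = a + b + 1" "M 12 = B + length ds" "M 13 = B + 2 * length ds"
     "13 < B" "b \<le> a" "a \<le> length ds"
    and arr: "\<forall>i. 1 \<le> i \<and> i \<le> length ds \<longrightarrow> M (B + i) = dd ds i"
      "\<forall>j. 1 \<le> j \<and> j \<le> a \<longrightarrow> M (B + length ds + j) = f j"
      "\<forall>q. 1 \<le> q \<and> q \<le> a + b \<longrightarrow> M (B + 2 * length ds + q) = out q"
    using I unfolding MI_def by simp_all
  have x: "a < length ds \<Longrightarrow> M (Suc (B + a)) = dd ds (Suc a)"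
     "b < a \<Longrightarrow> M (Suc (B + length ds + b)) = f (Suc b)"
     "b < length ds \<Longrightarrow> M (Suc (B + b)) = dd ds (Suc b)"
    using arr r by (auto dest: spec[of _ "Suc a"] spec[of _ "Suc b"])
  show ?thesis
    using r arr lt e x unfolding MI_def
    by (simp add: fun_upd_apply run_Suc run_num step_prog)
qed


lemma iterS1f:
  assumes I: "MI ds B a b f out M" and lt: "a + b < 2 * length ds" and e: "b < a" "a = length ds" "\<not> a + b + 1 - f (b + 1) \<le> dd ds (b + 1)"
  shows "\<exists>M'. run prog 15 (94, M) = (127, M')"
proof -
  have r: "M 2 = 2 * length ds + 1" "M 3 = length ds" "M 4 = B" "M 7 = 1" "M 8 = 0"
     "M 9 = a" "M 10 = b" "M 11 = a + b + 1" "M 12 = B + length ds" "M 13 = B + 2 * length ds"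
     "13 < B" "b \<le> a" "a \<le> length ds"
    and arr: "\<forall>i. 1 \<le> i \<and> i \<le> length ds \<longrightarrow> M (B + i) = dd ds i"
      "\<forall>j. 1 \<le> j \<and> j \<le> a \<longrightarrow> M (B + length ds + j) = f j"
      "\<forall>q. 1 \<le> q \<and> q \<le> a + b \<longrightarrow> M (B + 2 * length ds + q) = out q"
    using I unfolding MI_def by simp_all
  have x: "a < length ds \<Longrightarrow> M (Suc (B + a)) = dd ds (Suc a)"
     "b < a \<Longrightarrow> M (Suc (B + length ds + b)) = f (Suc b)"
     "b < length ds \<Longrightarrow> M (Suc (B + b)) = dd ds (Suc b)"
    using arr r by (auto dest: spec[of _ "Suc a"] spec[of _ "Suc b"])
  show ?thesis
    using r arr lt e x unfolding MI_def
    by (simp add: fun_upd_apply run_Suc run_num step_prog)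
qed


lemma iterS2:
  assumes I: "MI ds B a b f out M" and lt: "a + b < 2 * length ds" and e: "b < a" "a < length ds" "a + b + 1 < dd ds (a + 1)" "a + b + 1 - f (b + 1) \<le> dd ds (b + 1)"
  shows "\<exists>M'. run prog 24 (94, M) = (94, M') \<and>
           MI ds B a (b + 1) f (out(a + b + 1 := b + 1)) M'"
proof -
  have r: "M 2 = 2 * length ds + 1" "M 3 = length ds" "M 4 = B" "M 7 = 1" "M 8 = 0"
     "M 9 = a" "M 10 = b" "M 11 = a + b + 1" "M 12 = B + length ds" "M 13 = B + 2 * length ds"
     "13 < B" "b \<le> a" "a \<le> length ds"
    and arr: "\<forall>i. 1 \<le> i \<and> i \<le> length ds \<longrightarrow> M (B + i) = dd ds i"
      "\<forall>j. 1 \<le> j \<and> j \<le> a \<longrightarrow> M (B + length ds + j) = f j"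
      "\<forall>q. 1 \<le> q \<and> q \<le> a + b \<longrightarrow> M (B + 2 * length ds + q) = out q"
    using I unfolding MI_def by simp_all
  have x: "a < length ds \<Longrightarrow> M (Suc (B + a)) = dd ds (Suc a)"
     "b < a \<Longrightarrow> M (Suc (B + length ds + b)) = f (Suc b)"
     "b < length ds \<Longrightarrow> M (Suc (B + b)) = dd ds (Suc b)"
    using arr r by (auto dest: spec[of _ "Suc a"] spec[of _ "Suc b"])
  show ?thesis
    using r arr lt e x unfolding MI_def
    by (simp add: fun_upd_apply run_Suc run_num step_prog)
qed


lemma iterS2f:
  assumes I: "MI ds B a b f out M" and lt: "a + b < 2 * length ds" and e: "b < a" "a < length ds" "a + b + 1 < dd ds (a + 1)" "\<not> a + b + 1 - f (b + 1) \<le> dd ds (b + 1)"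
  shows "\<exists>M'. run prog 20 (94, M) = (127, M')"
proof -
  have r: "M 2 = 2 * length ds + 1" "M 3 = length ds" "M 4 = B" "M 7 = 1" "M 8 = 0"
     "M 9 = a" "M 10 = b" "M 11 = a + b + 1" "M 12 = B + length ds" "M 13 = B + 2 * length ds"
     "13 < B" "b \<le> a" "a \<le> length ds"
    and arr: "\<forall>i. 1 \<le> i \<and> i \<le> length ds \<longrightarrow> M (B + i) = dd ds i"
      "\<forall>j. 1 \<le> j \<and> j \<le> a \<longrightarrow> M (B + length ds + j) = f j"
      "\<forall>q. 1 \<le> q \<and> q \<le> a + b \<longrightarrow> M (B + 2 * length ds + q) = out q"
    using I unfolding MI_def by simp_all
  have x: "a < length ds \<Longrightarrow> M (Suc (B + a)) = dd ds (Suc a)"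
     "b < a \<Longrightarrow> M (Suc (B + length ds + b)) = f (Suc b)"
     "b < length ds \<Longrightarrow> M (Suc (B + b)) = dd ds (Suc b)"
    using arr r by (auto dest: spec[of _ "Suc a"] spec[of _ "Suc b"])
  show ?thesis
    using r arr lt e x unfolding MI_def
    by (simp add: fun_upd_apply run_Suc run_num step_prog)
qed


lemma iterExit:
  assumes I: "MI ds B a b f out M" and lt: "a + b = 2 * length ds" and e: "True"
  shows "\<exists>M'. run prog 2 (94, M) = (129, M') \<and> MI ds B a b f out M'"
proof -
  have r: "M 2 = 2 * length ds + 1" "M 3 = length ds" "M 4 = B" "M 7 = 1" "M 8 = 0"
     "M 9 = a" "M 10 = b" "M 11 = a + b + 1" "M 12 = B + length ds" "M 13 = B + 2 * length ds"
     "13 < B" "b \<le> a" "a \<le> length ds"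
    and arr: "\<forall>i. 1 \<le> i \<and> i \<le> length ds \<longrightarrow> M (B + i) = dd ds i"
      "\<forall>j. 1 \<le> j \<and> j \<le> a \<longrightarrow> M (B + length ds + j) = f j"
      "\<forall>q. 1 \<le> q \<and> q \<le> a + b \<longrightarrow> M (B + 2 * length ds + q) = out q"
    using I unfolding MI_def by simp_all
  have x: "a < length ds \<Longrightarrow> M (Suc (B + a)) = dd ds (Suc a)"
     "b < a \<Longrightarrow> M (Suc (B + length ds + b)) = f (Suc b)"
     "b < length ds \<Longrightarrow> M (Suc (B + b)) = dd ds (Suc b)"
    using arr r by (auto dest: spec[of _ "Suc a"] spec[of _ "Suc b"])
  show ?thesis
    using r arr lt e x unfolding MI_def
    by (simp add: fun_upd_apply run_Suc run_num step_prog)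
qed


lemma main_loop:
  "MI ds B a b f out M \<Longrightarrow> a + b + k = 2 * length ds \<Longrightarrow>
   (case lrun ds k (a, b, f, out) of
      None \<Rightarrow> \<exists>t M'. t \<le> 24 * k + 2 \<and> run prog t (94, M) = (127, M')
    | Some (a', b', f', out') \<Rightarrow> \<exists>t M'. t \<le> 24 * k + 2 \<and> run prog t (94, M) = (129, M') \<and> MI ds B a' b' f' out' M')"
proof (induction k arbitrary: a b f out M)
  case 0
  then obtain M' where "run prog 2 (94, M) = (129, M')" "MI ds B a b f out M'"
    using iterExit[of ds B a b f out M] 0 by auto
  then show ?case by (auto intro!: exI[of _ 2])
next
  case (Suc k)
  have lt: "a + b < 2 * length ds" using Suc.prems(2) by simp
  have ab: "b \<le> a" "a \<le> length ds" using Suc.prems(1) unfolding MI_def by auto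
  show ?case
  proof (cases "b < a \<and> (a = length ds \<or> a + b + 1 < dd ds (a + 1))")
    case True
    then have ba: "b < a" by simp
    show ?thesis
    proof (cases "a + b + 1 - f (b + 1) \<le> dd ds (b + 1)")
      case ok: True
      have ls: "lstep ds (a, b, f, out) = Some (a, b + 1, f, out(a + b + 1 := b + 1))"
        using True ok unfolding lstep_def by simp
      obtain t1 M1 where t1: "t1 \<le> 24" "run prog t1 (94, M) = (94, M1)"
        and M1: "MI ds B a (b + 1) f (out(a + b + 1 := b + 1)) M1"
      proof (cases "a = length ds")
        case True
        then show ?thesis using iterS1[OF Suc.prems(1) lt ba True ok] that[of 19] by auto
      next
        case False
        then have "a < length ds" "a + b + 1 < dd ds (a + 1)" using ab \<open>b < a \<and> _\<close> by auto
        then show ?thesis using iterS2[OF Suc.prems(1) lt ba _ _ ok] that[of 24] by auto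
      qed
      have IH: "case lrun ds k (a, b + 1, f, out(a + b + 1 := b + 1)) of
          None \<Rightarrow> \<exists>t M'. t \<le> 24 * k + 2 \<and> run prog t (94, M1) = (127, M')
        | Some (a', b', f', out') \<Rightarrow> \<exists>t M'. t \<le> 24 * k + 2 \<and> run prog t (94, M1) = (129, M') \<and> MI ds B a' b' f' out' M'"
        using Suc.IH[OF M1] Suc.prems(2) by (simp only: add_Suc_right add_Suc add.assoc)
      show ?thesis
      proof (cases "lrun ds k (a, b + 1, f, out(a + b + 1 := b + 1))")
        case None
        then obtain t2 M' where t2: "t2 \<le> 24 * k + 2" "run prog t2 (94, M1) = (127, M')" using IH by auto
        have "run prog (t1 + t2) (94, M) = (127, M')" using t1 t2 by (simp add: run_add)
        moreover have "t1 + t2 \<le> 24 * Suc k + 2" using t1 t2 by simp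
        ultimately show ?thesis using None ls by auto
      next
        case (Some st)
        then obtain a' b' f' out' where st: "st = (a', b', f', out')" by (cases st) auto
        then obtain t2 M' where t2: "t2 \<le> 24 * k + 2" "run prog t2 (94, M1) = (129, M')" "MI ds B a' b' f' out' M'"
          using IH Some by auto
        have "run prog (t1 + t2) (94, M) = (129, M')" using t1 t2 by (simp add: run_add)
        moreover have "t1 + t2 \<le> 24 * Suc k + 2" using t1 t2 by simp
        ultimately show ?thesis using Some st ls t2(3) by auto
      qed
    next
      case bad: False
      have ls: "lstep ds (a, b, f, out) = None"
        using True bad unfolding lstep_def by simp
      obtain t1 M1 where t1: "t1 \<le> 24" "run prog t1 (94, M) = (127, M1)"
      proof (cases "a = length ds")
        case True
        then show ?thesis using iterS1f[OF Suc.prems(1) lt ba True bad] that[of 15] by auto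
      next
        case False
        then have "a < length ds" "a + b + 1 < dd ds (a + 1)" using ab \<open>b < a \<and> _\<close> by auto
        then show ?thesis using iterS2f[OF Suc.prems(1) lt ba _ _ bad] that[of 20] by auto
      qed
      then show ?thesis using ls by (auto intro!: exI[of _ t1])
    qed
  next
    case False
    have ls: "lstep ds (a, b, f, out) = Some (a + 1, b, f(a + 1 := a + b + 1), out(a + b + 1 := a + 1))"
      using False unfolding lstep_def by simp
    obtain t1 M1 where t1: "t1 \<le> 24" "run prog t1 (94, M) = (94, M1)"
      and M1: "MI ds B (a + 1) b (f(a + 1 := a + b + 1)) (out(a + b + 1 := a + 1)) M1"
    proof (cases "b = a")
      case True
      then show ?thesis using iterF1[OF Suc.prems(1) lt True] that[of 12] by auto
    next
      case False
      then have "b < a" "a < length ds" "dd ds (a + 1) \<le> a + b + 1"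
        using ab \<open>\<not> (b < a \<and> _)\<close> by auto
      then show ?thesis using iterF2[OF Suc.prems(1) lt] that[of 19] by auto
    qed
    have IH: "case lrun ds k (a + 1, b, f(a + 1 := a + b + 1), out(a + b + 1 := a + 1)) of
        None \<Rightarrow> \<exists>t M'. t \<le> 24 * k + 2 \<and> run prog t (94, M1) = (127, M')
      | Some (a', b', f', out') \<Rightarrow> \<exists>t M'. t \<le> 24 * k + 2 \<and> run prog t (94, M1) = (129, M') \<and> MI ds B a' b' f' out' M'"
      using Suc.IH[OF M1] Suc.prems(2) by (simp only: add_Suc_right add_Suc add.assoc)
    show ?thesis
    proof (cases "lrun ds k (a + 1, b, f(a + 1 := a + b + 1), out(a + b + 1 := a + 1))")
      case None
      then obtain t2 M' where t2: "t2 \<le> 24 * k + 2" "run prog t2 (94, M1) = (127, M')" using IH by auto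
      have "run prog (t1 + t2) (94, M) = (127, M')" using t1 t2 by (simp add: run_add)
      moreover have "t1 + t2 \<le> 24 * Suc k + 2" using t1 t2 by simp
      ultimately show ?thesis using None ls by auto
    next
      case (Some st)
      then obtain a' b' f' out' where st: "st = (a', b', f', out')" by (cases st) auto
      then obtain t2 M' where t2: "t2 \<le> 24 * k + 2" "run prog t2 (94, M1) = (129, M')" "MI ds B a' b' f' out' M'"
        using IH Some by auto
      have "run prog (t1 + t2) (94, M) = (129, M')" using t1 t2 by (simp add: run_add)
      moreover have "t1 + t2 \<le> 24 * Suc k + 2" using t1 t2 by simp
      ultimately show ?thesis using Some st ls t2(3) by auto
    qed
  qed
qed


lemma fail_phase: "run prog 2 (127, M) = (166, M(0 := 0))"
  by (simp add: run_Suc run_num step_prog)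

lemma succ_init:
  "run prog 2 (129, M) = (131, M(1 := M 3 + M 3, 2 := 13))"
  by (simp add: run_Suc run_num step_prog)

definition OI :: "nat \<Rightarrow> nat \<Rightarrow> (nat \<Rightarrow> nat) \<Rightarrow> nat \<Rightarrow> (nat \<Rightarrow> nat) \<Rightarrow> bool" where
  "OI n B out q M \<longleftrightarrow> M 1 = q \<and> q \<le> 2 * n \<and> M 2 = 13 \<and> M 7 = 1 \<and> M 8 = 0 \<and> M 13 = B + 2 * n \<and> 13 < B \<and>
     (\<forall>r. 1 \<le> r \<and> r \<le> 2 * n \<longrightarrow> M (B + 2 * n + r) = out r) \<and>
     (\<forall>r. q < r \<and> r \<le> 2 * n \<longrightarrow> M r = out r)"

lemma out_loop:
  "OI n B out q M \<Longrightarrow> \<exists>t M'. t \<le> 7 * q + 2 \<and> run prog t (131, M) = (138, M') \<and>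
     M' 2 = 13 \<and> M' 13 = B + 2 * n \<and> 13 < B \<and>
     (\<forall>r. 1 \<le> r \<and> r \<le> 2 * n \<longrightarrow> M' (B + 2 * n + r) = out r) \<and>
     (\<forall>r. 13 < r \<and> r \<le> 2 * n \<longrightarrow> M' r = out r)"
proof (induction q arbitrary: M)
  case 0
  then show ?case
    unfolding OI_def by (intro exI[of _ 2]) (simp add: run_Suc run_num step_prog)
next
  case (Suc q)
  note r = Suc.prems[unfolded OI_def]
  show ?case
  proof (cases "Suc q \<le> 13")
    case True
    then show ?thesis using r
      by (intro exI[of _ 2]) (auto simp: run_Suc run_num step_prog)
  next
    case False
    have rd: "M (B + 2 * n + Suc q) = out (Suc q)" using r False by auto
    define M1 where "M1 = M(5 := Suc q - 13, 6 := B + 2 * n + Suc q, 5 := out (Suc q), Suc q := out (Suc q), 1 := q)"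
    have run1: "run prog 7 (131, M) = (131, M1)"
      using r False rd unfolding M1_def by (simp add: run_Suc run_num step_prog)
    have "OI n B out q M1"
      unfolding OI_def M1_def using r False by auto
    then obtain t M' where t: "t \<le> 7 * q + 2" "run prog t (131, M1) = (138, M')" and
      post: "M' 2 = 13 \<and> M' 13 = B + 2 * n \<and> 13 < B \<and>
     (\<forall>r. 1 \<le> r \<and> r \<le> 2 * n \<longrightarrow> M' (B + 2 * n + r) = out r) \<and>
     (\<forall>r. 13 < r \<and> r \<le> 2 * n \<longrightarrow> M' r = out r)"
      using Suc.IH by blast
    have "run prog (7 + t) (131, M) = (138, M')" using run1 t by (simp add: run_add)
    moreover have "7 + t \<le> 7 * Suc q + 2" using t by simp
    ultimately show ?thesis using post by blast
  qed
qed

lemma oend: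
  assumes "M 2 = 13" "13 < M 13"
  shows "\<exists>Mf. run prog 28 (138, M) = (166, Mf) \<and> Mf 0 = 1 \<and>
     (\<forall>k. 1 \<le> k \<and> k \<le> 13 \<longrightarrow> Mf k = M (M 13 + k)) \<and> (\<forall>r. 13 < r \<longrightarrow> Mf r = M r)"
  using assms
  apply (simp add: run_Suc run_num step_prog)
  apply (intro allI impI)
  apply (simp add: add.commute)
  apply arith
  done


definition CP :: "nat list \<Rightarrow> nat \<Rightarrow> (nat \<Rightarrow> nat) \<Rightarrow> bool" where
  "CP ds Z M \<longleftrightarrow> M 2 = Z \<and> length ds < Z \<and> 13 < Z \<and>
     (\<forall>k. k < 13 \<longrightarrow> M (Z + k) = input_mem ds (k + 1)) \<and> M (Z + 13) = length ds \<and>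
     (\<forall>i. 13 < i \<and> i \<le> length ds \<longrightarrow> M i = input_mem ds i)"

lemma lt13: "(k::nat) < 13 \<longleftrightarrow> k = 0 \<or> k = 1 \<or> k = 2 \<or> k = 3 \<or> k = 4 \<or> k = 5 \<or> k = 6 \<or>
   k = 7 \<or> k = 8 \<or> k = 9 \<or> k = 10 \<or> k = 11 \<or> k = 12"
  by presburger

lemma small_phase:
  assumes n: "length ds < 13"
  shows "\<exists>M'. run prog 28 (0, input_mem ds) = (63, M') \<and> CP ds 26 M'"
proof -
  have f: "input_mem ds 0 = length ds" "input_mem ds 13 = 0" "input_mem ds 38 = 0"
    using n by (auto simp: input_mem_def)
  show ?thesis
    using n f unfolding CP_def
    by (simp add: run_Suc run_num step_prog lt13 numeral_2_eq_2[symmetric]) auto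
qed

lemma big_phase:
  assumes w: "wfi ds" and n: "13 \<le> length ds"
  shows "\<exists>M'. run prog 36 (0, input_mem ds) = (63, M') \<and> CP ds (length ds + input_mem ds 1) M'"
proof -
  have p: "0 < ds ! k" if "k < length ds" for k using w that unfolding wfi_def by auto
  have f2: "0 < ds ! 0" using n p[of 0] by (cases ds) auto
  have f: "input_mem ds 0 = length ds" "input_mem ds 13 \<noteq> 0" "0 < input_mem ds 1"
    using n p[of 0] p[of 12] f2 by (auto simp: input_mem_def)
  have f3: "input_mem ds 1 = ds ! 0" using n by (simp add: input_mem_def)
    have r1: "run prog 1 (0, input_mem ds) = (1, input_mem ds)"
      using f by (simp add: run_Suc step_prog)
    have "\<exists>M'. run prog 35 (1, input_mem ds) = (63, M') \<and> CP ds (length ds + input_mem ds 1) M'"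
    using n f unfolding CP_def
    apply (simp add: run_Suc run_num step_prog numeral_2_eq_2[symmetric])
    apply (intro allI impI)
    apply (simp add: add.commute)
    apply arith
    done
    then show ?thesis using r1 run_add[of prog 1 35] by simp
qed


definition L1I :: "nat list \<Rightarrow> nat \<Rightarrow> nat \<Rightarrow> (nat \<Rightarrow> nat) \<Rightarrow> bool" where
  "L1I ds Z i M \<longleftrightarrow> M 1 = i \<and> 1 \<le> i \<and> i \<le> 14 \<and> M 2 = Z \<and> M 3 = length ds \<and> M 4 = Z + 13 \<and>
     M 7 = 1 \<and> M 8 = 0 \<and> length ds < Z \<and> 13 < Z \<and>
     (\<forall>k. k < 13 \<longrightarrow> M (Z + k) = input_mem ds (k + 1)) \<and>
     (\<forall>i'. 13 < i' \<and> i' \<le> length ds \<longrightarrow> M i' = input_mem ds i') \<and>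
     (\<forall>j. 1 \<le> j \<and> j < i \<longrightarrow> M (Z + 13 + j) = input_mem ds j)"

definition L2I :: "nat list \<Rightarrow> nat \<Rightarrow> nat \<Rightarrow> (nat \<Rightarrow> nat) \<Rightarrow> bool" where
  "L2I ds Z i M \<longleftrightarrow> M 1 = i \<and> 14 \<le> i \<and> (i \<le> length ds + 1 \<or> i = 14) \<and> M 3 = length ds \<and> M 4 = Z + 13 \<and>
     M 7 = 1 \<and> M 8 = 0 \<and> length ds < Z \<and> 13 < Z \<and>
     (\<forall>i'. 13 < i' \<and> i' \<le> length ds \<longrightarrow> M i' = input_mem ds i') \<and>
     (\<forall>j. 1 \<le> j \<and> j < i \<longrightarrow> M (Z + 13 + j) = input_mem ds j)"

lemma common_init:
  assumes "CP ds Z M"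
  shows "\<exists>M'. run prog 6 (63, M) = (69, M') \<and> L1I ds Z 1 M'"
  using assms unfolding CP_def L1I_def
  by (simp add: run_Suc run_num step_prog)

lemma L1_iter:
  assumes I: "L1I ds Z i M" and i: "i \<le> 13"
  shows "\<exists>M'. run prog 10 (69, M) = (69, M') \<and> L1I ds Z (i + 1) M'"
proof -
  have r: "M 1 = i" "1 \<le> i" "M 2 = Z" "M 3 = length ds" "M 4 = Z + 13"
     "M 7 = 1" "M 8 = 0" "length ds < Z" "13 < Z"
    and a: "\<forall>k. k < 13 \<longrightarrow> M (Z + k) = input_mem ds (k + 1)"
      "\<forall>i'. 13 < i' \<and> i' \<le> length ds \<longrightarrow> M i' = input_mem ds i'"
      "\<forall>j. 1 \<le> j \<and> j < i \<longrightarrow> M (Z + 13 + j) = input_mem ds j"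
    using I unfolding L1I_def by simp_all
  have x: "M (Z + i - 1) = input_mem ds i"
    using a(1)[rule_format, of "i - 1"] r i by simp
  show ?thesis
    using r a i x unfolding L1I_def
    by (simp add: run_Suc run_num step_prog) (auto simp: less_Suc_eq)
qed


lemma L1_exit:
  assumes I: "L1I ds Z 14 M"
  shows "\<exists>M'. run prog 3 (69, M) = (79, M') \<and> L2I ds Z 14 M'"
  using I unfolding L1I_def L2I_def
  by (simp add: run_Suc run_num step_prog)

lemma L1_loop:
  "L1I ds Z i M \<Longrightarrow> 14 - i = k \<Longrightarrow>
   \<exists>t M'. t \<le> 10 * k + 3 \<and> run prog t (69, M) = (79, M') \<and> L2I ds Z 14 M'"
proof (induction k arbitrary: i M)
  case 0
  then have "i = 14" unfolding L1I_def by simp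
  then obtain M' where "run prog 3 (69, M) = (79, M')" "L2I ds Z 14 M'"
    using L1_exit 0 by blast
  then show ?case by (intro exI[of _ 3]) auto
next
  case (Suc k)
  then have i: "i \<le> 13" by simp
  obtain M1 where r1: "run prog 10 (69, M) = (69, M1)" and M1: "L1I ds Z (i + 1) M1"
    using L1_iter[OF Suc.prems(1) i] by blast
  obtain t M' where t: "t \<le> 10 * k + 3" "run prog t (69, M1) = (79, M')" "L2I ds Z 14 M'"
  proof -
    have "14 - (i + 1) = k" using Suc.prems(2) by simp
    then show ?thesis using Suc.IH[OF M1] that by blast
  qed
  have "run prog (10 + t) (69, M) = (79, M')" using r1 t by (simp add: run_add)
  then show ?case using t by (intro exI[of _ "10 + t"]) auto
qed

lemma L2_iter:
  assumes I: "L2I ds Z i M" and i: "i \<le> length ds"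
  shows "\<exists>M'. run prog 8 (79, M) = (79, M') \<and> L2I ds Z (i + 1) M'"
proof -
  have r: "M 1 = i" "14 \<le> i" "M 3 = length ds" "M 4 = Z + 13"
     "M 7 = 1" "M 8 = 0" "length ds < Z" "13 < Z"
    and a: "\<forall>i'. 13 < i' \<and> i' \<le> length ds \<longrightarrow> M i' = input_mem ds i'"
      "\<forall>j. 1 \<le> j \<and> j < i \<longrightarrow> M (Z + 13 + j) = input_mem ds j"
    using I unfolding L2I_def by simp_all
  have x: "M i = input_mem ds i"
    using a(1) r i by simp
  show ?thesis
    using r a i x unfolding L2I_def
    by (simp add: run_Suc run_num step_prog)
qed

lemma L2_exit:
  assumes I: "L2I ds Z i M" and i: "length ds < i"
  shows "\<exists>M'. run prog 3 (79, M) = (87, M') \<and> M' 3 = length ds \<and> M' 4 = Z + 13 \<and> M' 7 = 1 \<and> M' 8 = 0 \<and>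
     13 < Z \<and> (\<forall>j. 1 \<le> j \<and> j \<le> length ds \<longrightarrow> M' (Z + 13 + j) = input_mem ds j)"
  using I i unfolding L2I_def
  by (simp add: run_Suc run_num step_prog)

lemma L2_loop:
  "L2I ds Z i M \<Longrightarrow> length ds + 1 - i = k \<Longrightarrow>
   \<exists>t M'. t \<le> 8 * k + 3 \<and> run prog t (79, M) = (87, M') \<and> M' 3 = length ds \<and> M' 4 = Z + 13 \<and> M' 7 = 1 \<and> M' 8 = 0 \<and>
     13 < Z \<and> (\<forall>j. 1 \<le> j \<and> j \<le> length ds \<longrightarrow> M' (Z + 13 + j) = input_mem ds j)"
proof (induction k arbitrary: i M)
  case 0
  then have "length ds < i" by simp
  then obtain M' where "run prog 3 (79, M) = (87, M') \<and> M' 3 = length ds \<and> M' 4 = Z + 13 \<and> M' 7 = 1 \<and> M' 8 = 0 \<and>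
     13 < Z \<and> (\<forall>j. 1 \<le> j \<and> j \<le> length ds \<longrightarrow> M' (Z + 13 + j) = input_mem ds j)"
    using L2_exit 0 by blast
  then show ?case by (intro exI[of _ 3]) auto
next
  case (Suc k)
  then have i: "i \<le> length ds" by simp
  obtain M1 where r1: "run prog 8 (79, M) = (79, M1)" and M1: "L2I ds Z (i + 1) M1"
    using L2_iter[OF Suc.prems(1) i] by blast
  obtain t M' where t: "t \<le> 8 * k + 3" "run prog t (79, M1) = (87, M')" and
     post: "M' 3 = length ds \<and> M' 4 = Z + 13 \<and> M' 7 = 1 \<and> M' 8 = 0 \<and>
     13 < Z \<and> (\<forall>j. 1 \<le> j \<and> j \<le> length ds \<longrightarrow> M' (Z + 13 + j) = input_mem ds j)"
  proof -
    have "length ds + 1 - (i + 1) = k" using Suc.prems(2) by simp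
    then show ?thesis using Suc.IH[OF M1] that by blast
  qed
  have "run prog (8 + t) (79, M) = (87, M')" using r1 t by (simp add: run_add)
  then show ?case using t post by (intro exI[of _ "8 + t"]) auto
qed

lemma input_mem_dd: "1 \<le> j \<Longrightarrow> j \<le> length ds \<Longrightarrow> input_mem ds j = dd ds j"
  by (simp add: input_mem_def dd_def)

lemma main_init:
  assumes "M 3 = length ds" "M 4 = Z + 13" "M 7 = 1" "M 8 = 0" "13 < Z"
    "\<forall>j. 1 \<le> j \<and> j \<le> length ds \<longrightarrow> M (Z + 13 + j) = input_mem ds j"
  shows "\<exists>M'. run prog 7 (87, M) = (94, M') \<and> MI ds (Z + 13) 0 0 f out M'"
  using assms input_mem_dd[of _ ds] unfolding MI_def
  by (simp add: run_Suc run_num step_prog)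


lemma run_seq: "run P t1 c = c' \<Longrightarrow> run P t2 c' = c'' \<Longrightarrow> run P (t1 + t2) c = c''"
  by (simp add: run_add)

lemma entry_phase:
  assumes w: "wfi ds"
  shows "\<exists>t Z M. t \<le> 36 \<and> run prog t (0, input_mem ds) = (63, M) \<and> CP ds Z M"
proof (cases "length ds < 13")
  case True
  obtain M where "run prog 28 (0, input_mem ds) = (63, M)" "CP ds 26 M" using small_phase[OF True] by blast
  then show ?thesis by (intro exI[of _ 28] exI[of _ 26]) auto
next
  case False
  then have "13 \<le> length ds" by simp
  obtain M where "run prog 36 (0, input_mem ds) = (63, M)" "CP ds (length ds + input_mem ds 1) M"
    using big_phase[OF w \<open>13 \<le> length ds\<close>] by blast
  then show ?thesis by (intro exI[of _ 36] exI[of _ "length ds + input_mem ds 1"]) auto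
qed

lemma to_head:
  assumes w: "wfi ds"
  shows "\<exists>t B M. t \<le> 8 * length ds + 185 \<and> run prog t (0, input_mem ds) = (94, M) \<and>
            MI ds B 0 0 (\<lambda>_. 0) (\<lambda>_. 0) M"
proof -
  obtain t1 Z M1 where t1: "t1 \<le> 36" "run prog t1 (0, input_mem ds) = (63, M1)" and c: "CP ds Z M1"
    using entry_phase[OF w] by blast
  obtain M2 where r2: "run prog 6 (63, M1) = (69, M2)" and M2: "L1I ds Z 1 M2"
    using common_init[OF c] by blast
  obtain t3 M3 where t3: "t3 \<le> 10 * 13 + 3" "run prog t3 (69, M2) = (79, M3)" and M3: "L2I ds Z 14 M3"
    using L1_loop[OF M2, of 13] by auto
  obtain t4 M4 where t4: "t4 \<le> 8 * (length ds + 1 - 14) + 3" "run prog t4 (79, M3) = (87, M4)"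
    and M4: "M4 3 = length ds" "M4 4 = Z + 13" "M4 7 = 1" "M4 8 = 0" "13 < Z"
      "\<forall>j. 1 \<le> j \<and> j \<le> length ds \<longrightarrow> M4 (Z + 13 + j) = input_mem ds j"
    using L2_loop[OF M3, of "length ds + 1 - 14"] by auto
  obtain M5 where r5: "run prog 7 (87, M4) = (94, M5)" and M5: "MI ds (Z + 13) 0 0 (\<lambda>_. 0) (\<lambda>_. 0) M5"
    using main_init[OF M4] by blast
  have "run prog (t1 + 6 + t3 + t4 + 7) (0, input_mem ds) = (94, M5)"
    using run_seq[OF run_seq[OF run_seq[OF run_seq[OF t1(2) r2] t3(2)] t4(2)] r5] .
  moreover have "t1 + 6 + t3 + t4 + 7 \<le> 8 * length ds + 185" using t1 t3 t4 by simp
  ultimately show ?thesis using M5 by blast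
qed

lemma wfi_of: "two_visits_instance ds \<Longrightarrow> distinct ds \<Longrightarrow> wfi ds"
  unfolding two_visits_instance_def wfi_def using strict_sorted_iff by blast

lemma whole:
  assumes w: "wfi ds"
  shows "\<exists>t M. t \<le> 300 * (length ds + 1) \<and> run prog t (0, input_mem ds) = (166, M) \<and> correct_output ds M"
proof -
  let ?n = "length ds"
  obtain t0 B M0 where t0: "t0 \<le> 8 * ?n + 185" "run prog t0 (0, input_mem ds) = (94, M0)"
    and M0: "MI ds B 0 0 (\<lambda>_. 0) (\<lambda>_. 0) M0"
    using to_head[OF w] by blast
  have LP: "case lrun ds (2 * ?n) (0, 0, \<lambda>_. 0, \<lambda>_. 0) of
      None \<Rightarrow> \<exists>t M'. t \<le> 24 * (2 * ?n) + 2 \<and> run prog t (94, M0) = (127, M')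
    | Some (a', b', f', out') \<Rightarrow> \<exists>t M'. t \<le> 24 * (2 * ?n) + 2 \<and> run prog t (94, M0) = (129, M') \<and> MI ds B a' b' f' out' M'"
    using main_loop[OF M0] by simp
  have LI: "linv ds 0 0 (\<lambda>_. 0) (\<lambda>_. 0)" using linv_init[OF w] .
  show ?thesis
  proof (cases "lrun ds (2 * ?n) (0, 0, \<lambda>_. 0, \<lambda>_. 0)")
    case None
    then obtain t1 M1 where t1: "t1 \<le> 24 * (2 * ?n) + 2" "run prog t1 (94, M0) = (127, M1)"
      using LP by auto
    have nf: "\<not> has_feasible_schedule ds" using lrun_None[OF w LI _ None] by simp
    have "run prog (t0 + t1 + 2) (0, input_mem ds) = (166, M1(0 := 0))"
      using run_seq[OF run_seq[OF t0(2) t1(2)] fail_phase] .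
    moreover have "t0 + t1 + 2 \<le> 300 * (?n + 1)" using t0 t1 by simp
    moreover have "correct_output ds (M1(0 := 0))" using nf unfolding correct_output_def by simp
    ultimately show ?thesis by blast
  next
    case (Some st)
    then obtain a' b' f' out' where st: "st = (a', b', f', out')" by (cases st) auto
    obtain t1 M1 where t1: "t1 \<le> 24 * (2 * ?n) + 2" "run prog t1 (94, M0) = (129, M1)"
      and M1: "MI ds B a' b' f' out' M1"
      using LP Some st by auto
    have L: "linv ds a' b' f' out' \<and> a' + b' = 2 * ?n"
      using lrun_Some[OF w LI, of "2 * ?n" a' b' f' out'] Some st by simp
    have fs: "feasible_schedule ds (map (\<lambda>q. out' (q + 1)) [0..<2 * ?n])"
      using final_feasible[OF w] L by blast
    then have hf: "has_feasible_schedule ds" unfolding has_feasible_schedule_def by blast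
    define M2 where "M2 = M1(1 := M1 3 + M1 3, 2 := 13)"
    have r2: "run prog 2 (129, M1) = (131, M2)" unfolding M2_def by (rule succ_init)
    have O2: "OI ?n B out' (2 * ?n) M2"
      using M1 L unfolding MI_def OI_def M2_def by auto
    obtain t3 M3 where t3: "t3 \<le> 7 * (2 * ?n) + 2" "run prog t3 (131, M2) = (138, M3)"
      and M3: "M3 2 = 13" "M3 13 = B + 2 * ?n" "13 < B"
       "\<forall>r. 1 \<le> r \<and> r \<le> 2 * ?n \<longrightarrow> M3 (B + 2 * ?n + r) = out' r"
       "\<forall>r. 13 < r \<and> r \<le> 2 * ?n \<longrightarrow> M3 r = out' r"
      using out_loop[OF O2] by blast
    obtain Mf where rf: "run prog 28 (138, M3) = (166, Mf)" and Mf: "Mf 0 = 1"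
      "\<forall>k. 1 \<le> k \<and> k \<le> 13 \<longrightarrow> Mf k = M3 (M3 13 + k)" "\<forall>r. 13 < r \<longrightarrow> Mf r = M3 r"
      using oend[of M3] M3 by auto
    have os: "output_schedule ?n Mf = map (\<lambda>q. out' (q + 1)) [0..<2 * ?n]"
      unfolding output_schedule_def
    proof (rule map_cong[OF refl])
      fix q assume "q \<in> set [0..<2 * ?n]"
      then have q: "q < 2 * ?n" by simp
      show "Mf (q + 1) = out' (q + 1)"
      proof (cases "q + 1 \<le> 13")
        case True
        have "Mf (q + 1) = M3 (B + 2 * ?n + (q + 1))" using Mf(2) M3(2) True by simp
        also have "\<dots> = out' (q + 1)" using M3(4)[rule_format, of "q + 1"] q by simp
        finally show ?thesis .
      next
        case False
        then show ?thesis using Mf(3) M3(5) q by simp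
      qed
    qed
    have "run prog (t0 + t1 + 2 + t3 + 28) (0, input_mem ds) = (166, Mf)"
      using run_seq[OF run_seq[OF run_seq[OF run_seq[OF t0(2) t1(2)] r2] t3(2)] rf] .
    moreover have "t0 + t1 + 2 + t3 + 28 \<le> 300 * (?n + 1)" using t0 t1 t3 by simp
    moreover have "correct_output ds Mf" unfolding correct_output_def using Mf(1) hf os fs by simp
    ultimately show ?thesis by blast
  qed
qed

theorem theorem3:
  shows "\<exists>(P :: instr list) (c :: nat). \<forall>ds.
           two_visits_instance ds \<and> distinct ds \<longrightarrow>
           (\<exists>t \<le> c * (length ds + 1).
              halted P (run P t (0, input_mem ds)) \<and>
              correct_output ds (snd (run P t (0, input_mem ds))))"
proof -
  have "\<forall>ds. two_visits_instance ds \<and> distinct ds \<longrightarrow>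
           (\<exists>t \<le> 300 * (length ds + 1).
              halted prog (run prog t (0, input_mem ds)) \<and>
              correct_output ds (snd (run prog t (0, input_mem ds))))"
  proof (intro allI impI)
    fix ds assume h: "two_visits_instance ds \<and> distinct ds"
    then have w: "wfi ds" using wfi_of by blast
    obtain t M where tm: "t \<le> 300 * (length ds + 1)" "run prog t (0, input_mem ds) = (166, M)" "correct_output ds M"
      using whole[OF w] by blast
    have "halted prog (run prog t (0, input_mem ds)) \<and> correct_output ds (snd (run prog t (0, input_mem ds)))"
      using tm by (simp add: halted_def)
    then show "\<exists>t \<le> 300 * (length ds + 1).
              halted prog (run prog t (0, input_mem ds)) \<and>
              correct_output ds (snd (run prog t (0, input_mem ds)))"
      using tm(1) by blast
  qed
  then show ?thesis by blast
qed

end
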